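(* Fix $m \ge 2$, a concept index $j \in [m]$, and write $-j = [m]\setminus\{j\}$. Let $(\hat Y^{(t)}, Z_j^{(t)}, Z_{-j}^{(t)})$, $t = 1,2,\dots$, be i.i.d. draws from a joint distribution $P_{\hat Y Z_j Z_{-j}}$ on $\mathbb{R}\times\mathbb{R}\times\mathbb{R}^{m-1}$, and for each $t$ let $\tilde Z_j^{(t)}$ be drawn from the conditional distribution $P_{Z_j \mid Z_{-j} = Z_{-j}^{(t)}}$, independently of everything else given $Z_{-j}^{(t)}$. Let $k_{Y}, k_{j}, k_{-j}$ be bounded positive-definite kernels on $\mathbb{R}, \mathbb{R}, \mathbb{R}^{m-1}$, let $\rho_1 \equiv 0$ and for $t \ge 2$ $$\rho_t(y, z_j, z_{-j}) = \frac{1}{t-1}\sum_{t'=1}^{t-1} k_Y(\hat Y^{(t')}, y)\,k_{-j}(Z_{-j}^{(t')}, z_{-j})\Big[k_j(Z_j^{(t')}, z_j) - k_j(\tilde Z_j^{(t')}, z_j)\Big],$$ and define the payoff $\kappa_t = \tanh\big(\rho_t(\hat Y^{(t)}, Z_j^{(t)}, Z_{-j}^{(t)}) - \rho_t(\hat Y^{(t)}, \tilde Z_j^{(t)}, Z_{-j}^{(t)})\big)$. Let $\mathcal{F}_{t-1}$ be the $\sigma$-algebra generated by all observations and samples up to time $t-1$, let $v_t \in [-1,1]$ be $\mathcal{F}_{t-1}$-measurable betting fractions, and define the wealth $K_0 = 1$, $K_t = K_{t-1}(1 + v_t\kappa_t)$. If the null hypothesis $H^{\mathrm{GC}}_{0,j}:\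 \hat Y \perp\!\!\!\perp Z_j \mid Z_{-j}$ holds, then $\mathbb{E}[\kappa_t \mid \mathcal{F}_{t-1}] = 0$ for all $t \ge 1$, and consequently for every $\alpha \in (0,1)$, $\mathbb{P}[\exists t \geq 1 : K_t \geq 1/\alpha] \leq \alpha$.
   Context: Setting: $\hat Y$ is the (scalar) output of a fixed model for one class, and $Z = (Z_1,\dots,Z_m)$ is a vector of semantic concept values. $H^{\mathrm{GC}}_{0,j}$ is the global conditional semantic independence null hypothesis, equivalently $P_{\hat Y Z_j Z_{-j}} = P_{\hat Y \tilde Z_j Z_{-j}}$ with $\tilde Z_j \sim P_{Z_j\mid Z_{-j}}$. The function $\rho_t$ is the plug-in estimate (from data up to time $t-1$) of the MMD witness between these two distributions in the tensor-product RKHS. *)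

theory Defs
  imports "HOL-Probability.Probability"
begin

definition pd_kernel :: "('b \<Rightarrow> 'b \<Rightarrow> real) \<Rightarrow> bool" where
  "pd_kernel k \<longleftrightarrow> (\<forall>x y. k x y = k y x) \<and>
     (\<forall>(n::nat) (c::nat \<Rightarrow> real) (xs::nat \<Rightarrow> 'b).
        0 \<le> (\<Sum>i<n. \<Sum>l<n. c i * c l * k (xs i) (xs l)))"

definition bounded_kernel :: "('b \<Rightarrow> 'b \<Rightarrow> real) \<Rightarrow> bool" where
  "bounded_kernel k \<longleftrightarrow> (\<exists>B. \<forall>x y. \<bar>k x y\<bar> \<le> B)"

text \<open>Law of (Y, Z_j~, Z_{-j}) where Z_j~ is drawn from the Markov kernel Kc at Z_{-j},
  starting from the law P of (Y, Z_j, Z_{-j}).\<close>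
definition resample_law ::
  "(real \<times> real \<times> 'z::topological_space) measure \<Rightarrow> ('z \<Rightarrow> real measure) \<Rightarrow> (real \<times> real \<times> 'z \<times> real) measure" where
  "resample_law P Kc = P \<bind> (\<lambda>(y, zj, zm). distr (Kc zm) borel (\<lambda>z. (y, zj, zm, z)))"

definition is_cond_distr :: "(real \<times> real \<times> 'z::topological_space) measure \<Rightarrow> ('z \<Rightarrow> real measure) \<Rightarrow> bool" where
  "is_cond_distr P Kc \<longleftrightarrow> Kc \<in> borel \<rightarrow>\<^sub>M prob_algebra borel \<and>
     distr P borel (\<lambda>(y, zj, zm). (zj, zm)) =
       distr P borel (\<lambda>(y, zj, zm). zm) \<bind> (\<lambda>zm. distr (Kc zm) borel (\<lambda>z. (z, zm)))"

text \<open>Global conditional semantic independence null H^GC_{0,j}, in the form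
  P_{Y Z_j Z_{-j}} = P_{Y Z_j~ Z_{-j}} with Z_j~ ~ P_{Z_j | Z_{-j}}.\<close>
definition H0_GC :: "(real \<times> real \<times> 'z::topological_space) measure \<Rightarrow> ('z \<Rightarrow> real measure) \<Rightarrow> bool" where
  "H0_GC P Kc \<longleftrightarrow> P = P \<bind> (\<lambda>(y, zj, zm). distr (Kc zm) borel (\<lambda>z. (y, z, zm)))"

definition rho ::
  "(nat \<Rightarrow> 'a \<Rightarrow> real) \<Rightarrow> (nat \<Rightarrow> 'a \<Rightarrow> real) \<Rightarrow> (nat \<Rightarrow> 'a \<Rightarrow> 'z) \<Rightarrow> (nat \<Rightarrow> 'a \<Rightarrow> real) \<Rightarrow>
   (real \<Rightarrow> real \<Rightarrow> real) \<Rightarrow> (real \<Rightarrow> real \<Rightarrow> real) \<Rightarrow> ('z \<Rightarrow> 'z \<Rightarrow> real) \<Rightarrow>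
   nat \<Rightarrow> 'a \<Rightarrow> real \<Rightarrow> real \<Rightarrow> 'z \<Rightarrow> real" where
  "rho Y Zj Zm Zt kY kj km t \<omega> y zj zm =
     (if t \<le> 1 then 0 else
        (1 / real (t - 1)) * (\<Sum>s\<in>{1..t-1}.
           kY (Y s \<omega>) y * km (Zm s \<omega>) zm * (kj (Zj s \<omega>) zj - kj (Zt s \<omega>) zj)))"

definition kappa ::
  "(nat \<Rightarrow> 'a \<Rightarrow> real) \<Rightarrow> (nat \<Rightarrow> 'a \<Rightarrow> real) \<Rightarrow> (nat \<Rightarrow> 'a \<Rightarrow> 'z) \<Rightarrow> (nat \<Rightarrow> 'a \<Rightarrow> real) \<Rightarrow>
   (real \<Rightarrow> real \<Rightarrow> real) \<Rightarrow> (real \<Rightarrow> real \<Rightarrow> real) \<Rightarrow> ('z \<Rightarrow> 'z \<Rightarrow> real) \<Rightarrow>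
   nat \<Rightarrow> 'a \<Rightarrow> real" where
  "kappa Y Zj Zm Zt kY kj km t \<omega> =
     tanh (rho Y Zj Zm Zt kY kj km t \<omega> (Y t \<omega>) (Zj t \<omega>) (Zm t \<omega>)
         - rho Y Zj Zm Zt kY kj km t \<omega> (Y t \<omega>) (Zt t \<omega>) (Zm t \<omega>))"

definition filt ::
  "'a measure \<Rightarrow> (nat \<Rightarrow> 'a \<Rightarrow> 'b::topological_space) \<Rightarrow> nat \<Rightarrow> 'a measure" where
  "filt M W n = sigma (space M) (\<Union>t\<in>{1..n}. {W t -` A \<inter> space M | A. A \<in> sets borel})"

fun wealth :: "(nat \<Rightarrow> 'a \<Rightarrow> real) \<Rightarrow> (nat \<Rightarrow> 'a \<Rightarrow> real) \<Rightarrow> nat \<Rightarrow> 'a \<Rightarrow> real" where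
  "wealth v k 0 \<omega> = 1"
| "wealth v k (Suc n) \<omega> = wealth v k n \<omega> * (1 + v (Suc n) \<omega> * k (Suc n) \<omega>)"

end

theory Submission imports Defs begin

lemma cont_meas2: fixes h :: "'a::second_countable_topology \<times> 'b::second_countable_topology \<Rightarrow> 'c::topological_space"
  shows "continuous_on UNIV h \<Longrightarrow> h \<in> (borel \<Otimes>\<^sub>M borel) \<rightarrow>\<^sub>M borel"
  by (simp add: borel_prod borel_measurable_continuous_onI)

lemma kc_sets: assumes "Kc \<in> borel \<rightarrow>\<^sub>M prob_algebra (borel::real measure)"
  shows "sets (Kc z) = sets borel" "prob_space (Kc z)" "space (Kc z) = UNIV"
proof -
  have "Kc z \<in> space (prob_algebra borel)" using measurable_space[OF assms] by auto
  then show "sets (Kc z) = sets borel" "prob_space (Kc z)" by (auto simp: space_prob_algebra)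
  then show "space (Kc z) = UNIV" using sets_eq_imp_space_eq by fastforce
qed

lemma resample_swap:
  fixes P :: "(real \<times> real \<times> (real^'d::finite)) measure" and Kc :: "real^'d \<Rightarrow> real measure"
  assumes P: "prob_space P" "sets P = sets borel"
    and Kc: "Kc \<in> borel \<rightarrow>\<^sub>M prob_algebra borel" and null: "H0_GC P Kc"
  shows "distr (resample_law P Kc) borel (\<lambda>w. (fst w, snd (snd (snd w)), fst (snd (snd w)), fst (snd w)))
         = resample_law P Kc"
proof -
  define S :: "real \<times> real \<times> (real^'d) \<times> real \<Rightarrow> _" where
    "S = (\<lambda>w. (fst w, snd (snd (snd w)), fst (snd (snd w)), fst (snd w)))"
  have Sm: "S \<in> borel \<rightarrow>\<^sub>M borel" unfolding S_def
    by (intro borel_measurable_continuous_onI continuous_intros)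
  define f where "f = (\<lambda>p::real \<times> real \<times> (real^'d). distr (Kc (snd (snd p))) borel (\<lambda>z. (fst p, z, snd (snd p))))"
  define g where "g = (\<lambda>p::real \<times> real \<times> (real^'d). distr (Kc (snd (snd p))) borel (\<lambda>z. (fst p, fst (snd p), snd (snd p), z)))"
  have Kc2: "(\<lambda>p::real \<times> real \<times> (real^'d). Kc (snd (snd p))) \<in> borel \<rightarrow>\<^sub>M prob_algebra borel"
    by (rule measurable_compose[OF _ Kc]) (intro borel_measurable_continuous_onI continuous_intros)
  have fm: "f \<in> borel \<rightarrow>\<^sub>M prob_algebra borel" unfolding f_def
    by (rule measurable_distr_prob_space2[OF Kc2]) (auto intro!: cont_meas2 continuous_intros simp: case_prod_beta')
  have gm: "g \<in> borel \<rightarrow>\<^sub>M prob_algebra borel" unfolding g_def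
    by (rule measurable_distr_prob_space2[OF Kc2]) (auto intro!: cont_meas2 continuous_intros simp: case_prod_beta')
  have fmP: "f \<in> P \<rightarrow>\<^sub>M subprob_algebra borel"
    using measurable_prob_algebraD[OF fm] by (simp add: measurable_cong_sets[OF P(2) refl])
  have gms: "g \<in> borel \<rightarrow>\<^sub>M subprob_algebra borel" using measurable_prob_algebraD[OF gm] .
  have spP: "space P = UNIV" using sets_eq_imp_space_eq[OF P(2)] by simp
  have R1: "resample_law P Kc = P \<bind> g"
    unfolding resample_law_def g_def by (rule bind_cong) (auto split: prod.split)
  have N1: "P = P \<bind> f"
  proof -
    have "P = P \<bind> (\<lambda>(y, zj, zm). distr (Kc zm) borel (\<lambda>z. (y, z, zm)))"
      using null unfolding H0_GC_def .
    also have "\<dots> = P \<bind> f" unfolding f_def by (rule bind_cong) (auto split: prod.split)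
    finally show ?thesis .
  qed
  have R2: "resample_law P Kc = P \<bind> (\<lambda>p. f p \<bind> g)"
    using R1 N1 bind_assoc[OF fmP gms] by metis
  have loc: "distr (f p \<bind> g) borel S = f p \<bind> g" for p
  proof -
    obtain y zj zm where p: "p = (y, zj, zm)" by (cases p) auto
    interpret K: prob_space "Kc zm" using kc_sets[OF Kc] by auto
    interpret KK: pair_prob_space "Kc zm" "Kc zm" by unfold_locales
    have sK: "sets (Kc zm) = sets borel" using kc_sets[OF Kc] by auto
    have sKK: "sets (Kc zm \<Otimes>\<^sub>M Kc zm) = sets (borel \<Otimes>\<^sub>M borel)"
      by (rule sets_pair_measure_cong[OF sK sK])
    have sKB: "sets (Kc zm \<Otimes>\<^sub>M borel) = sets (borel \<Otimes>\<^sub>M borel)"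
      by (rule sets_pair_measure_cong[OF sK refl])
    have Kin: "Kc zm \<in> space (prob_algebra borel)" using measurable_space[OF Kc] by auto
    have dm: "(\<lambda>a. distr (Kc zm) borel (\<lambda>b. h a b)) \<in> Kc zm \<rightarrow>\<^sub>M subprob_algebra borel"
      if "continuous_on UNIV (\<lambda>(a,b). h a b)" for h :: "real \<Rightarrow> real \<Rightarrow> real \<times> real \<times> (real^'d) \<times> real"
      by (rule measurable_prob_algebraD, rule measurable_distr_prob_space2[OF measurable_const[OF Kin]])
         (simp add: measurable_cong_sets[OF sKB refl] cont_meas2 that)
    have e1: "f p \<bind> g = Kc zm \<bind> (\<lambda>a. distr (Kc zm) borel (\<lambda>b. (y, a, zm, b)))"
    proof -
      have "f p \<bind> g = Kc zm \<bind> (\<lambda>z. g (y, z, zm))"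
        unfolding p f_def
        by (simp, rule bind_distr[OF _ gms])
           (auto simp: measurable_cong_sets[OF kc_sets(1)[OF Kc] refl] kc_sets(3)[OF Kc]
                 intro!: borel_measurable_continuous_onI continuous_intros)
      then show ?thesis by (simp add: g_def)
    qed
    have "distr (Kc zm \<bind> (\<lambda>a. distr (Kc zm) borel (\<lambda>b. (y, a, zm, b)))) borel S
       = Kc zm \<bind> (\<lambda>a. distr (distr (Kc zm) borel (\<lambda>b. (y, a, zm, b))) borel S)"
      by (rule distr_bind[OF dm _ Sm]) (auto simp: kc_sets(3)[OF Kc] case_prod_beta' intro!: continuous_intros)
    also have "\<dots> = Kc zm \<bind> (\<lambda>a. distr (Kc zm) borel (\<lambda>b. (y, b, zm, a)))"
      by (intro bind_cong refl, subst distr_distr[OF Sm])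
         (auto simp: measurable_cong_sets[OF sK refl] S_def comp_def intro!: borel_measurable_continuous_onI continuous_intros)
    also have "\<dots> = Kc zm \<bind> (\<lambda>a. Kc zm \<bind> (\<lambda>b. return borel (y, b, zm, a)))"
      by (intro bind_cong refl, rule bind_return_distr'[symmetric])
           (auto simp: measurable_cong_sets[OF sK refl] kc_sets(3)[OF Kc]
                 intro!: borel_measurable_continuous_onI continuous_intros)
    also have "\<dots> = Kc zm \<bind> (\<lambda>b. Kc zm \<bind> (\<lambda>a. return borel (y, b, zm, a)))"
    proof -
      have C0: "(\<lambda>p. return borel (y, snd p, zm, fst p)) \<in> Kc zm \<Otimes>\<^sub>M Kc zm \<rightarrow>\<^sub>M subprob_algebra (borel :: (real \<times> real \<times> (real^'d) \<times> real) measure)"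
        by (rule measurable_compose[OF _ return_measurable])
           (simp add: measurable_cong_sets[OF sKK refl] cont_meas2 continuous_intros)
      have C: "(\<lambda>(a,b). return borel (y, b, zm, a)) \<in> Kc zm \<Otimes>\<^sub>M Kc zm \<rightarrow>\<^sub>M subprob_algebra (borel :: (real \<times> real \<times> (real^'d) \<times> real) measure)"
        using C0 by (simp add: case_prod_beta')
      show ?thesis using KK.bind_rotate[OF C] by simp
    qed
    also have "\<dots> = Kc zm \<bind> (\<lambda>b. distr (Kc zm) borel (\<lambda>a. (y, b, zm, a)))"
      by (intro bind_cong refl, rule bind_return_distr')
           (auto simp: measurable_cong_sets[OF sK refl] kc_sets(3)[OF Kc]
                 intro!: borel_measurable_continuous_onI continuous_intros)
    finally show ?thesis using e1 by simp
  qed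
  have "distr (resample_law P Kc) borel S = P \<bind> (\<lambda>p. distr (f p \<bind> g) borel S)"
    unfolding R2
    by (rule distr_bind[OF _ _ Sm]) (auto simp: spP intro!: measurable_bind2[OF fmP gms])
  also have "\<dots> = resample_law P Kc" unfolding R2 loc ..
  finally show ?thesis unfolding S_def .
qed
lemma indep_swap_zero:
  fixes X :: "'a \<Rightarrow> 'x" and V :: "'a \<Rightarrow> 'x" and H :: "'x \<Rightarrow> 'x \<Rightarrow> real"
  assumes M: "prob_space M"
    and ind: "prob_space.indep_var M N X N2 V"
    and S: "S \<in> N2 \<rightarrow>\<^sub>M N2"
    and dS: "distr M N2 (\<lambda>\<omega>. S (V \<omega>)) = distr M N2 V"
    and H: "(\<lambda>p. H (fst p) (snd p)) \<in> borel_measurable (N \<Otimes>\<^sub>M N2)"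
    and Hanti: "\<And>x w. H x (S w) = - H x w"
    and B: "B \<in> sets N"
  shows "(\<integral>\<omega>. indicator B (X \<omega>) * H (X \<omega>) (V \<omega>) \<partial>M) = 0"
proof -
  interpret prob_space M by fact
  have Xm: "X \<in> M \<rightarrow>\<^sub>M N" and Vm: "V \<in> M \<rightarrow>\<^sub>M N2"
    using ind by (auto simp: indep_var_distribution_eq)
  have ind2: "indep_var N X N2 (\<lambda>\<omega>. S (V \<omega>))"
    using indep_var_compose[OF ind measurable_ident S] by (simp add: comp_def)
  define G where "G = (\<lambda>p. indicator B (fst p) * H (fst p) (snd p) :: real)"
  have Gm: "G \<in> borel_measurable (N \<Otimes>\<^sub>M N2)" unfolding G_def
    using H B by measurable
  have "(\<integral>\<omega>. indicator B (X \<omega>) * H (X \<omega>) (V \<omega>) \<partial>M) = integral\<^sup>L (distr M (N \<Otimes>\<^sub>M N2) (\<lambda>\<omega>. (X \<omega>, V \<omega>))) G"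
    by (subst integral_distr[OF _ Gm]) (auto simp: G_def Xm Vm intro!: measurable_Pair)
  also have "\<dots> = integral\<^sup>L (distr M N X \<Otimes>\<^sub>M distr M N2 V) G"
    using ind by (simp add: indep_var_distribution_eq)
  also have "\<dots> = integral\<^sup>L (distr M N X \<Otimes>\<^sub>M distr M N2 (\<lambda>\<omega>. S (V \<omega>))) G"
    by (simp add: dS)
  also have "\<dots> = integral\<^sup>L (distr M (N \<Otimes>\<^sub>M N2) (\<lambda>\<omega>. (X \<omega>, S (V \<omega>)))) G"
    using ind2 by (simp add: indep_var_distribution_eq)
  also have "\<dots> = (\<integral>\<omega>. - (indicator B (X \<omega>) * H (X \<omega>) (V \<omega>)) \<partial>M)"
    by (subst integral_distr[OF _ Gm]) (auto simp: G_def Xm Vm Hanti intro!: measurable_Pair measurable_compose[OF Vm S])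
  also have "\<dots> = - (\<integral>\<omega>. indicator B (X \<omega>) * H (X \<omega>) (V \<omega>) \<partial>M)"
    by simp
  finally show ?thesis by simp
qed

lemma kmeas:
  fixes k :: "'b::second_countable_topology \<Rightarrow> 'b \<Rightarrow> real"
  assumes k: "(\<lambda>(a, b). k a b) \<in> borel_measurable borel"
    and f: "f \<in> borel_measurable N" and g: "g \<in> borel_measurable N"
  shows "(\<lambda>x. k (f x) (g x)) \<in> borel_measurable N"
proof -
  have "(\<lambda>(a, b). k a b) \<in> borel_measurable (borel \<Otimes>\<^sub>M borel)" using k by (simp add: borel_prod)
  from measurable_compose[OF measurable_Pair[OF f g] this] show ?thesis by simp
qed

lemma fst_meas: "f \<in> N \<rightarrow>\<^sub>M (borel :: ('a::second_countable_topology \<times> 'b::second_countable_topology) measure)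
   \<Longrightarrow> (\<lambda>x. fst (f x)) \<in> N \<rightarrow>\<^sub>M borel"
  by (rule measurable_compose[of f]) (auto intro!: borel_measurable_continuous_onI continuous_intros)

lemma snd_meas: "f \<in> N \<rightarrow>\<^sub>M (borel :: ('a::second_countable_topology \<times> 'b::second_countable_topology) measure)
   \<Longrightarrow> (\<lambda>x. snd (f x)) \<in> N \<rightarrow>\<^sub>M borel"
  by (rule measurable_compose[of f]) (auto intro!: borel_measurable_continuous_onI continuous_intros)

lemma tanh_meas: "f \<in> borel_measurable N \<Longrightarrow> (\<lambda>x. tanh (f x :: real)) \<in> borel_measurable N"
  by (rule measurable_compose[of f]) (auto intro!: borel_measurable_continuous_onI continuous_intros)

fun Lw :: "(nat \<Rightarrow> 'a \<Rightarrow> real) \<Rightarrow> (nat \<Rightarrow> 'a \<Rightarrow> real) \<Rightarrow> (nat \<Rightarrow> 'a \<Rightarrow> real) \<Rightarrow> nat \<Rightarrow> 'a \<Rightarrow> real" where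
  "Lw u v k 0 \<omega> = 1"
| "Lw u v k (Suc n) \<omega> = Lw u v k n \<omega> * (1 + u n \<omega> * v (Suc n) \<omega> * k (Suc n) \<omega>)"

theorem proposition1:
  fixes M :: "'a measure"
    and Y Zj Zt :: "nat \<Rightarrow> 'a \<Rightarrow> real"
    and Zm :: "nat \<Rightarrow> 'a \<Rightarrow> (real ^ 'd)"
    and P :: "(real \<times> real \<times> (real ^ 'd)) measure"
    and Kc :: "(real ^ 'd) \<Rightarrow> real measure"
    and kY kj :: "real \<Rightarrow> real \<Rightarrow> real"
    and km :: "(real ^ 'd) \<Rightarrow> (real ^ 'd) \<Rightarrow> real"
    and v :: "nat \<Rightarrow> 'a \<Rightarrow> real"
  defines "W \<equiv> (\<lambda>t \<omega>. (Y t \<omega>, Zj t \<omega>, Zm t \<omega>, Zt t \<omega>))"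
    and "\<kappa> \<equiv> kappa Y Zj Zm Zt kY kj km"
    and "F \<equiv> filt M (\<lambda>t \<omega>. (Y t \<omega>, Zj t \<omega>, Zm t \<omega>, Zt t \<omega>))"
  assumes M: "prob_space M"
    and iid_indep: "prob_space.indep_vars M (\<lambda>_. borel) W {1..}"
    and iid_law: "\<And>t. t \<ge> 1 \<Longrightarrow> distr M borel (W t) = resample_law P Kc"
    and P: "prob_space P" "sets P = sets borel"
    and cond: "is_cond_distr P Kc"
    and kern: "pd_kernel kY" "pd_kernel kj" "pd_kernel km"
      "bounded_kernel kY" "bounded_kernel kj" "bounded_kernel km"
      "(\<lambda>(a, b). kY a b) \<in> borel_measurable borel"
      "(\<lambda>(a, b). kj a b) \<in> borel_measurable borel"
      "(\<lambda>(a, b). km a b) \<in> borel_measurable borel"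
    and v_meas: "\<And>t. t \<ge> 1 \<Longrightarrow> v t \<in> borel_measurable (F (t - 1))"
    and v_range: "\<And>t \<omega>. t \<ge> 1 \<Longrightarrow> \<omega> \<in> space M \<Longrightarrow> v t \<omega> \<in> {-1..1}"
    and null: "H0_GC P Kc"
  shows "(\<forall>t\<ge>1. AE \<omega> in M. real_cond_exp M (F (t - 1)) (\<kappa> t) \<omega> = 0) \<and>
         (\<forall>\<alpha>\<in>{0<..<1}. measure M {\<omega>\<in>space M. \<exists>t\<ge>1. wealth v \<kappa> t \<omega> \<ge> 1 / \<alpha>} \<le> \<alpha>)"
  proof -
  interpret prob_space M by (rule M)
  have F': "F = filt M W" unfolding F_def W_def ..
  have Wm: "W t \<in> M \<rightarrow>\<^sub>M borel" if "t \<ge> 1" for t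
    using iid_indep that unfolding indep_vars_def by auto
  define G where "G n = (\<Union>t\<in>{1..n}. {W t -` A \<inter> space M | A. A \<in> sets borel})" for n
  have GM: "G n \<subseteq> sets M" for n
    unfolding G_def using Wm by (auto intro!: measurable_sets)
  have sF: "sets (F n) = sigma_sets (space M) (G n)" for n
    unfolding F' filt_def G_def[symmetric] using GM[of n] sets.sets_into_space
    by (intro sets_measure_of) auto
  have spF: "space (F n) = space M" for n
    unfolding F' filt_def by (simp add: space_measure_of_conv)
  have subF: "subalgebra M (F n)" for n
    unfolding subalgebra_def using sF spF GM sets.sigma_sets_subset by metis
  have monoF: "subalgebra (F n) (F m)" if "m \<le> n" for m n
  proof -
    have "G m \<subseteq> G n" unfolding G_def using that by (intro SUP_subset_mono) auto
    then show ?thesis unfolding subalgebra_def using sF spF sigma_sets_subseteq by metis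
  qed
  have WF: "W s \<in> F n \<rightarrow>\<^sub>M borel" if "1 \<le> s" "s \<le> n" for s n
  proof (rule measurableI)
    fix A :: "(real \<times> real \<times> (real^'d) \<times> real) set" assume "A \<in> sets borel"
    moreover have "s \<in> {1..n}" using that by auto
    ultimately have "W s -` A \<inter> space M \<in> G n" unfolding G_def by blast
    then show "W s -` A \<inter> space (F n) \<in> sets (F n)" unfolding sF spF by auto
  qed auto
  have sfs: "sigma_finite_subalgebra M (F n)" for n
    by (intro finite_measure_subalgebra_is_sigma_finite)
       (simp add: finite_measure_subalgebra_def finite_measure_subalgebra_axioms_def subF finite_measure_axioms)

  define r where "r t x y zj zm = (if t \<le> 1 then 0 else (1 / real (t - 1)) * (\<Sum>s\<in>{1..t-1}.
           kY (fst (x s)) y * km (fst (snd (snd (x s)))) zm * (kj (fst (snd (x s))) zj - kj (snd (snd (snd (x s)))) zj)))"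
    for t :: nat and x :: "nat \<Rightarrow> real \<times> real \<times> (real^'d) \<times> real" and y zj :: real and zm :: "real^'d"
  define h where "h t x w = tanh (r t x (fst w) (fst (snd w)) (fst (snd (snd w))) - r t x (fst w) (snd (snd (snd w))) (fst (snd (snd w))))"
    for t :: nat and x :: "nat \<Rightarrow> real \<times> real \<times> (real^'d) \<times> real" and w :: "real \<times> real \<times> (real^'d) \<times> real"
  define Xp where "Xp t \<omega> = restrict (\<lambda>s. W s \<omega>) {1..t-1}" for t \<omega>
  have kap: "\<kappa> t \<omega> = h t (Xp t \<omega>) (W t \<omega>)" for t \<omega>
    unfolding \<kappa>_def kappa_def rho_def h_def r_def Xp_def W_def
    by (auto intro!: sum.cong arg_cong[where f=tanh])
  have hmeas: "(\<lambda>p. h t (fst p) (snd p)) \<in> borel_measurable (PiM {1..t-1} (\<lambda>_. borel) \<Otimes>\<^sub>M borel)" for t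
  proof -
    let ?N = "PiM {1..t-1} (\<lambda>_. (borel :: (real \<times> real \<times> (real^'d) \<times> real) measure)) \<Otimes>\<^sub>M borel"
    have c: "(\<lambda>p. fst p s) \<in> ?N \<rightarrow>\<^sub>M borel" if "s \<in> {1..t-1}" for s
      by (rule measurable_compose[OF measurable_fst measurable_component_singleton[OF that]])
    have w: "(\<lambda>p. snd p) \<in> ?N \<rightarrow>\<^sub>M borel" by (rule measurable_snd)
    have rm: "(\<lambda>p. r t (fst p) (a p) (b p) (c p)) \<in> borel_measurable ?N"
      if a: "a \<in> borel_measurable ?N" and b: "b \<in> borel_measurable ?N" and cc: "c \<in> borel_measurable ?N" for a b c
      unfolding r_def
      by (intro measurable_If_restrict_space_iff[THEN iffD2] conjI borel_measurable_const borel_measurable_times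
            borel_measurable_sum borel_measurable_diff kmeas[OF kern(7)] kmeas[OF kern(8)] kmeas[OF kern(9)]
            fst_meas snd_meas c a b cc measurable_restrict_space1) (auto simp: pred_def)
    show ?thesis unfolding h_def
      by (intro tanh_meas borel_measurable_diff rm fst_meas snd_meas w)
  qed
  have XpF: "Xp t \<in> F n \<rightarrow>\<^sub>M PiM {1..t-1} (\<lambda>_. borel)" if "t \<le> n" for t n
    unfolding Xp_def by (intro measurable_restrict WF) (use that in auto)
  have kmF: "\<kappa> t \<in> borel_measurable (F n)" if "1 \<le> t" "t \<le> n" for t n
  proof -
    have "(\<lambda>\<omega>. h t (fst (Xp t \<omega>, W t \<omega>)) (snd (Xp t \<omega>, W t \<omega>))) \<in> borel_measurable (F n)"
      by (rule measurable_compose[OF measurable_Pair[OF XpF WF] hmeas]) (use that in auto)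
    then show ?thesis by (simp add: kap[abs_def])
  qed
  have kmM: "\<kappa> t \<in> borel_measurable M" if "1 \<le> t" for t
    using measurable_from_subalg[OF subF kmF[OF that order_refl]] .
  have kb: "\<bar>\<kappa> t \<omega>\<bar> \<le> 1" for t \<omega>
    using tanh_real_bounds unfolding \<kappa>_def kappa_def by (auto simp: abs_le_iff less_imp_le)
  have kint: "integrable M (\<kappa> t)" if "1 \<le> t" for t
    by (rule integrable_const_bound[where B=1]) (auto simp: kb intro: kmM[OF that])

  define Sw where "Sw = (\<lambda>w::real \<times> real \<times> (real^'d) \<times> real. (fst w, snd (snd (snd w)), fst (snd (snd w)), fst (snd w)))"
  have Swm: "Sw \<in> borel \<rightarrow>\<^sub>M borel" unfolding Sw_def
    by (intro borel_measurable_continuous_onI continuous_intros)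
  have dSw: "distr M borel (\<lambda>\<omega>. Sw (W t \<omega>)) = distr M borel (W t)" if "1 \<le> t" for t
  proof -
    have "distr M borel (\<lambda>\<omega>. Sw (W t \<omega>)) = distr (distr M borel (W t)) borel Sw"
      using distr_distr[OF Swm Wm[OF that]] by (simp add: comp_def)
    also have "\<dots> = distr M borel (W t)"
      unfolding iid_law[OF that] Sw_def using resample_swap[OF P(1,2) _ null] cond
      unfolding is_cond_distr_def by auto
    finally show ?thesis .
  qed
  have orthB: "(\<integral>\<omega>. indicator A \<omega> * \<kappa> t \<omega> \<partial>M) = 0" if t1: "1 \<le> t" and A: "A \<in> sets (F (t - 1))" for t A
  proof -
    let ?I = "{1..t-1}"
    let ?N = "PiM ?I (\<lambda>_. (borel :: (real \<times> real \<times> (real^'d) \<times> real) measure))"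
    let ?N2 = "PiM {t} (\<lambda>_. (borel :: (real \<times> real \<times> (real^'d) \<times> real) measure))"
    define V where "V \<omega> = restrict (\<lambda>i. W i \<omega>) {t}" for \<omega>
    define S' where "S' f = restrict (\<lambda>i. Sw (f i)) {t}" for f :: "nat \<Rightarrow> real \<times> real \<times> (real^'d) \<times> real"
    define emb where "emb w = restrict (\<lambda>i. w) {t}" for w :: "real \<times> real \<times> (real^'d) \<times> real"
    define H' where "H' x f = h t x (f t)" for x f :: "nat \<Rightarrow> real \<times> real \<times> (real^'d) \<times> real"
    have ind: "indep_var ?N (Xp t) ?N2 V"
      unfolding Xp_def[abs_def] V_def
      by (rule indep_var_restrict[OF iid_indep]) (use t1 in auto)
    have embm: "emb \<in> borel \<rightarrow>\<^sub>M ?N2" unfolding emb_def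
      by (rule measurable_restrict) simp
    have S'm: "S' \<in> ?N2 \<rightarrow>\<^sub>M ?N2" unfolding S'_def
      by (rule measurable_restrict, rule measurable_compose[OF measurable_component_singleton[where M="\<lambda>_. borel"] Swm]) auto
    have V_eq: "V = (\<lambda>\<omega>. emb (W t \<omega>))" unfolding V_def emb_def by (auto simp: restrict_def fun_eq_iff)
    have SV_eq: "(\<lambda>\<omega>. S' (V \<omega>)) = (\<lambda>\<omega>. emb (Sw (W t \<omega>)))" unfolding V_def emb_def S'_def by (auto simp: restrict_def fun_eq_iff)
    have dS: "distr M ?N2 (\<lambda>\<omega>. S' (V \<omega>)) = distr M ?N2 V"
    proof -
      have "distr M ?N2 (\<lambda>\<omega>. S' (V \<omega>)) = distr (distr M borel (\<lambda>\<omega>. Sw (W t \<omega>))) ?N2 emb"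
        unfolding SV_eq using distr_distr[OF embm measurable_compose[OF Wm[OF t1] Swm]] by (simp add: comp_def)
      also have "\<dots> = distr (distr M borel (W t)) ?N2 emb" by (simp add: dSw[OF t1])
      also have "\<dots> = distr M ?N2 V"
        unfolding V_eq using distr_distr[OF embm Wm[OF t1]] by (simp add: comp_def)
      finally show ?thesis .
    qed
    have H'm: "(\<lambda>p. H' (fst p) (snd p)) \<in> borel_measurable (?N \<Otimes>\<^sub>M ?N2)"
    proof -
      have "(\<lambda>p. (fst p, snd p t)) \<in> ?N \<Otimes>\<^sub>M ?N2 \<rightarrow>\<^sub>M ?N \<Otimes>\<^sub>M borel"
        by (intro measurable_Pair measurable_fst measurable_compose[OF measurable_snd measurable_component_singleton]) auto
      from measurable_compose[OF this hmeas[of t]] show ?thesis by (simp add: H'_def)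
    qed
    have Hanti: "H' x (S' f) = - H' x f" for x f
      unfolding H'_def S'_def h_def Sw_def by (simp flip: tanh_minus)
    obtain B where B: "B \<in> sets ?N" and AB: "A = Xp t -` B \<inter> space M"
    proof -
      have Xsp: "Xp t \<in> space M \<rightarrow> space ?N" unfolding Xp_def
        using Wm by (auto simp: space_PiM)
      let ?VA = "vimage_algebra (space M) (Xp t) ?N"
      have "G (t - 1) \<subseteq> sets ?VA"
      proof
        fix E assume "E \<in> G (t - 1)"
        then obtain s A' where s: "s \<in> ?I" and A': "A' \<in> sets borel" and E: "E = W s -` A' \<inter> space M"
          unfolding G_def by auto
        have "(\<lambda>x. x s) -` A' \<inter> space ?N \<in> sets ?N"
          by (rule measurable_sets[OF measurable_component_singleton[OF s] A'])
        moreover have "E = Xp t -` ((\<lambda>x. x s) -` A' \<inter> space ?N) \<inter> space M"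
          unfolding E using Xsp s by (auto simp: Xp_def)
        ultimately show "E \<in> sets ?VA" unfolding sets_vimage_algebra2[OF Xsp] by blast
      qed
      then have "sigma_sets (space M) (G (t - 1)) \<subseteq> sets ?VA"
        using sets.sigma_sets_subset[of "G (t-1)" ?VA] by simp
      then have "A \<in> {Xp t -` B \<inter> space M | B. B \<in> sets ?N}"
        using A sF sets_vimage_algebra2[OF Xsp] by auto
      then show ?thesis using that by blast
    qed
    have "(\<integral>\<omega>. indicator A \<omega> * \<kappa> t \<omega> \<partial>M) = (\<integral>\<omega>. indicator B (Xp t \<omega>) * H' (Xp t \<omega>) (V \<omega>) \<partial>M)"
      by (rule Bochner_Integration.integral_cong[OF refl]) (auto simp: AB kap H'_def V_def indicator_def)
    also have "\<dots> = 0"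
      by (rule indep_swap_zero[OF M ind S'm dS H'm Hanti B])
    finally show ?thesis .
  qed
  have condexp: "AE \<omega> in M. real_cond_exp M (F (t - 1)) (\<kappa> t) \<omega> = 0" if t1: "t \<ge> 1" for t
  proof -
    interpret sigma_finite_subalgebra M "F (t - 1)" by (rule sfs)
    show ?thesis
    proof (rule real_cond_exp_charact)
      fix A assume "A \<in> sets (F (t - 1))"
      then show "set_lebesgue_integral M A (\<kappa> t) = set_lebesgue_integral M A (\<lambda>_. 0)"
        using orthB[OF t1] by (simp add: set_lebesgue_integral_def)
    qed (auto simp: kint[OF t1])
  qed

  have orth: "(\<integral>\<omega>. g \<omega> * \<kappa> (Suc n) \<omega> \<partial>M) = 0"
    if g: "g \<in> borel_measurable (F n)" and gb: "\<And>\<omega>. \<omega> \<in> space M \<Longrightarrow> \<bar>g \<omega>\<bar> \<le> C" for g n C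
  proof -
    interpret sigma_finite_subalgebra M "F n" by (rule sfs)
    have gM: "g \<in> borel_measurable M" using measurable_from_subalg[OF subF g] .
    have bnd: "\<bar>g \<omega> * \<kappa> (Suc n) \<omega>\<bar> \<le> C" if "\<omega> \<in> space M" for \<omega>
    proof -
      have "\<bar>g \<omega>\<bar> * \<bar>\<kappa> (Suc n) \<omega>\<bar> \<le> \<bar>g \<omega>\<bar>" by (rule mult_left_le[OF kb]) simp
      then show ?thesis using gb[OF that] by (simp add: abs_mult)
    qed
    have int: "integrable M (\<lambda>\<omega>. g \<omega> * \<kappa> (Suc n) \<omega>)"
      by (rule integrable_const_bound[where B=C]) (auto simp: bnd intro!: borel_measurable_times gM kmM)
    have "(\<integral>\<omega>. g \<omega> * \<kappa> (Suc n) \<omega> \<partial>M) = (\<integral>\<omega>. g \<omega> * real_cond_exp M (F n) (\<kappa> (Suc n)) \<omega> \<partial>M)"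
      by (rule real_cond_exp_intg(2)[OF int g kmM, symmetric]) simp
    also have "\<dots> = (\<integral>\<omega>. 0 \<partial>M)"
      using condexp[of "Suc n"]
      by (intro integral_cong_AE) (auto intro!: borel_measurable_times gM borel_measurable_cond_exp2)
    finally show ?thesis by simp
  qed
  have part2: "measure M {\<omega>\<in>space M. \<exists>t\<ge>1. wealth v \<kappa> t \<omega> \<ge> 1 / \<alpha>} \<le> \<alpha>" if "\<alpha> \<in> {0<..<1}" for \<alpha>
  proof -
    define c where "c = 1 / \<alpha>"
    have c0: "0 < c" using that by (simp add: c_def)
    define K where "K = wealth v \<kappa>"
    define u where "u n \<omega> = (if \<exists>s\<in>{1..n}. c \<le> K s \<omega> then 0 else 1 :: real)" for n \<omega>
    define L where "L = Lw u v \<kappa>"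
    have vF: "v (Suc n) \<in> borel_measurable (F n)" for n using v_meas[of "Suc n"] by simp
    have KF: "K n \<in> borel_measurable (F n)" for n
    proof (induction n)
      case 0 then show ?case by (simp add: K_def)
    next
      case (Suc n)
      have "K n \<in> borel_measurable (F (Suc n))" by (rule measurable_from_subalg[OF monoF Suc]) simp
      moreover have "v (Suc n) \<in> borel_measurable (F (Suc n))" by (rule measurable_from_subalg[OF monoF vF]) simp
      ultimately show ?case unfolding K_def
        by (simp del: wealth.simps add: wealth.simps(2))
           (intro borel_measurable_times borel_measurable_add borel_measurable_const kmF[of "Suc n"], auto simp: K_def)
    qed
    have KFm: "K m \<in> borel_measurable (F n)" if "m \<le> n" for m n
      by (rule measurable_from_subalg[OF monoF[OF that] KF])
    have DF: "{\<omega>\<in>space M. \<exists>s\<in>{1..n}. c \<le> K s \<omega>} \<in> sets (F n)" for n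
    proof -
      have "{\<omega>\<in>space M. \<exists>s\<in>{1..n}. c \<le> K s \<omega>} = (\<Union>s\<in>{1..n}. K s -` {c..} \<inter> space (F n))"
        by (auto simp: spF)
      also have "\<dots> \<in> sets (F n)"
        by (intro sets.finite_UN finite_atLeastAtMost ballI measurable_sets[OF KFm]) auto
      finally show ?thesis .
    qed
    have uF: "u n \<in> borel_measurable (F n)" for n
    proof -
      have "(\<lambda>\<omega>. if \<exists>s\<in>{1..n}. c \<le> K s \<omega> then 0 else 1 :: real) \<in> borel_measurable (F n)"
        by (rule measurable_If) (use DF[of n] spF in auto)
      then show ?thesis by (simp add: u_def[abs_def])
    qed
    have LF: "L n \<in> borel_measurable (F n)" for n
    proof (induction n)
      case 0 then show ?case by (simp add: L_def)
    next
      case (Suc n)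
      have "L n \<in> borel_measurable (F (Suc n))" by (rule measurable_from_subalg[OF monoF Suc]) simp
      moreover have "v (Suc n) \<in> borel_measurable (F (Suc n))" by (rule measurable_from_subalg[OF monoF vF]) simp
      moreover have "u n \<in> borel_measurable (F (Suc n))" by (rule measurable_from_subalg[OF monoF uF]) simp
      ultimately show ?case unfolding L_def
        by (simp del: Lw.simps add: Lw.simps(2))
           (intro borel_measurable_times borel_measurable_add borel_measurable_const kmF[of "Suc n"], auto simp: L_def)
    qed
    have fac: "0 \<le> 1 + u n \<omega> * v (Suc n) \<omega> * \<kappa> (Suc n) \<omega> \<and> 1 + u n \<omega> * v (Suc n) \<omega> * \<kappa> (Suc n) \<omega> \<le> 2"
      if "\<omega> \<in> space M" for n \<omega>
    proof -
      have "\<bar>v (Suc n) \<omega>\<bar> \<le> 1" using v_range[of "Suc n" \<omega>] that by auto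
      moreover have "\<bar>u n \<omega>\<bar> \<le> 1" by (simp add: u_def)
      ultimately have "\<bar>u n \<omega> * v (Suc n) \<omega> * \<kappa> (Suc n) \<omega>\<bar> \<le> 1"
        using kb[of "Suc n" \<omega>] by (simp add: abs_mult mult_le_one)
      then show ?thesis by auto
    qed
    have Lb: "0 \<le> L n \<omega> \<and> L n \<omega> \<le> 2 ^ n" if "\<omega> \<in> space M" for n \<omega>
    proof (induction n)
      case 0 then show ?case by (simp add: L_def)
    next
      case (Suc n)
      let ?f = "1 + u n \<omega> * v (Suc n) \<omega> * \<kappa> (Suc n) \<omega>"
      have f: "0 \<le> ?f" "?f \<le> 2" using fac[OF that, of n] by auto
      have "L n \<omega> * ?f \<le> 2 ^ n * 2" by (rule mult_mono) (use Suc f in auto)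
      moreover have "L (Suc n) \<omega> = L n \<omega> * ?f" by (simp add: L_def)
      ultimately show ?case using Suc f by (simp add: mult.commute)
    qed
    have Lint: "integrable M (L n)" for n
      by (rule integrable_const_bound[where B="2^n"])
         (use Lb in \<open>auto intro: measurable_from_subalg[OF subF LF]\<close>)
    have LE: "(\<integral>\<omega>. L n \<omega> \<partial>M) = 1" for n
    proof (induction n)
      case 0 then show ?case by (simp add: L_def prob_space)
    next
      case (Suc n)
      have g: "(\<lambda>\<omega>. L n \<omega> * u n \<omega> * v (Suc n) \<omega>) \<in> borel_measurable (F n)"
        by (intro borel_measurable_times LF uF vF)
      have gb: "\<bar>L n \<omega> * u n \<omega> * v (Suc n) \<omega>\<bar> \<le> 2 ^ n" if "\<omega> \<in> space M" for \<omega>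
      proof -
        have "\<bar>v (Suc n) \<omega>\<bar> \<le> 1" using v_range[of "Suc n" \<omega>] that by auto
        moreover have "\<bar>u n \<omega>\<bar> \<le> 1" "0 \<le> \<bar>u n \<omega>\<bar>" by (auto simp: u_def)
        ultimately have "\<bar>u n \<omega> * v (Suc n) \<omega>\<bar> \<le> 1" by (simp add: abs_mult mult_le_one)
        then have "\<bar>L n \<omega>\<bar> * \<bar>u n \<omega> * v (Suc n) \<omega>\<bar> \<le> \<bar>L n \<omega>\<bar>" by (rule mult_left_le) simp
        then show ?thesis using Lb[OF that, of n] by (simp add: abs_mult mult.assoc)
      qed
      have o: "(\<integral>\<omega>. (L n \<omega> * u n \<omega> * v (Suc n) \<omega>) * \<kappa> (Suc n) \<omega> \<partial>M) = 0"
        by (rule orth[OF g gb])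
      have int2: "integrable M (\<lambda>\<omega>. (L n \<omega> * u n \<omega> * v (Suc n) \<omega>) * \<kappa> (Suc n) \<omega>)"
      proof (rule integrable_const_bound[where B="2^n"])
        show "AE x in M. norm (L n x * u n x * v (Suc n) x * \<kappa> (Suc n) x) \<le> 2 ^ n"
        proof (rule AE_I2)
          fix x assume x: "x \<in> space M"
          have "\<bar>L n x * u n x * v (Suc n) x\<bar> * \<bar>\<kappa> (Suc n) x\<bar> \<le> \<bar>L n x * u n x * v (Suc n) x\<bar>"
            by (rule mult_left_le[OF kb]) simp
          then show "norm (L n x * u n x * v (Suc n) x * \<kappa> (Suc n) x) \<le> 2 ^ n"
            using gb[OF x] by (simp add: abs_mult)
        qed
        show "(\<lambda>x. L n x * u n x * v (Suc n) x * \<kappa> (Suc n) x) \<in> borel_measurable M"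
          by (intro borel_measurable_times measurable_from_subalg[OF subF g] kmM) auto
      qed
      have "(\<integral>\<omega>. L (Suc n) \<omega> \<partial>M) = (\<integral>\<omega>. L n \<omega> + (L n \<omega> * u n \<omega> * v (Suc n) \<omega>) * \<kappa> (Suc n) \<omega> \<partial>M)"
        by (simp add: L_def algebra_simps)
      also have "\<dots> = (\<integral>\<omega>. L n \<omega> \<partial>M) + (\<integral>\<omega>. (L n \<omega> * u n \<omega> * v (Suc n) \<omega>) * \<kappa> (Suc n) \<omega> \<partial>M)"
        by (rule Bochner_Integration.integral_add[OF Lint int2])
      finally show ?case using Suc o by simp
    qed
    have rel: "(\<not> (\<exists>s\<in>{1..n}. c \<le> K s \<omega>) \<longrightarrow> L n \<omega> = K n \<omega>) \<and> ((\<exists>s\<in>{1..n}. c \<le> K s \<omega>) \<longrightarrow> c \<le> L n \<omega>)"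
      for n \<omega>
    proof (induction n)
      case 0 then show ?case by (simp add: L_def K_def)
    next
      case (Suc n)
      show ?case
      proof (cases "\<exists>s\<in>{1..n}. c \<le> K s \<omega>")
        case True
        then have "\<exists>s\<in>{1..Suc n}. c \<le> K s \<omega>" by auto
        then show ?thesis using Suc True by (simp add: L_def u_def)
      next
        case False
        then have LK: "L (Suc n) \<omega> = K (Suc n) \<omega>" using Suc by (simp add: L_def u_def K_def)
        have "(\<exists>s\<in>{1..Suc n}. c \<le> K s \<omega>) \<longleftrightarrow> c \<le> K (Suc n) \<omega>"
        proof
          assume "\<exists>s\<in>{1..Suc n}. c \<le> K s \<omega>"
          then obtain s where "s \<in> {1..Suc n}" "c \<le> K s \<omega>" by blast
          then show "c \<le> K (Suc n) \<omega>" using False by (cases "s = Suc n") auto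
        next
          assume "c \<le> K (Suc n) \<omega>"
          moreover have "Suc n \<in> {1..Suc n}" by simp
          ultimately show "\<exists>s\<in>{1..Suc n}. c \<le> K s \<omega>" by blast
        qed
        then show ?thesis using LK by auto
      qed
    qed
    define D where "D n = {\<omega>\<in>space M. \<exists>s\<in>{1..n}. c \<le> K s \<omega>}" for n
    have DM: "D n \<in> sets M" for n using DF[of n] subF[of n] unfolding D_def subalgebra_def by auto
    have measD: "measure M (D n) \<le> \<alpha>" for n
    proof -
      have "(\<integral>\<omega>. c * indicator (D n) \<omega> \<partial>M) \<le> (\<integral>\<omega>. L n \<omega> \<partial>M)"
      proof (rule integral_mono)
        show "integrable M (\<lambda>\<omega>. c * indicator (D n) \<omega>)"
          using DM[of n] by (intro integrable_mult_right integrable_real_indicator) (auto simp: less_top[symmetric])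
        show "integrable M (L n)" by (rule Lint)
        fix \<omega> assume "\<omega> \<in> space M"
        then show "c * indicator (D n) \<omega> \<le> L n \<omega>"
          using rel[of n \<omega>] Lb[of \<omega> n] by (auto simp: D_def indicator_def)
      qed
      then have "c * measure M (D n) \<le> 1" using LE[of n] DM[of n] by simp
      then show ?thesis using that c0 by (simp add: c_def field_simps)
    qed
    have inc: "incseq D" unfolding incseq_def D_def by fastforce
    have UD: "(\<Union>n. D n) = {\<omega>\<in>space M. \<exists>t\<ge>1. wealth v \<kappa> t \<omega> \<ge> 1 / \<alpha>}"
      unfolding D_def K_def c_def by fastforce
    have "(\<lambda>n. measure M (D n)) \<longlonglongrightarrow> measure M (\<Union>n. D n)"
      by (rule finite_Lim_measure_incseq) (use DM inc in auto)
    then have "measure M (\<Union>n. D n) \<le> \<alpha>"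
      by (rule LIMSEQ_le_const2) (use measD in auto)
    then show ?thesis unfolding UD .
  qed
  show ?thesis using condexp part2 by auto
qed

end
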